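(* Let $\pi$ be an $r$-homogeneous strongly log-concave distribution with associated matroid $\mathcal{M}=(E,\mathcal{I})$, and let $I\in\mathcal{I}$ with $|I|\le r-2$. Then the modified log-Sobolev constant of the walk $P^{\wedge}_{I,1}$ satisfies $\rho(P^{\wedge}_{I,1})\ge\frac12$.
   Context: $\pi:2^{[n]}\to\mathbb{R}_{\ge0}$ has generating polynomial $g_\pi(x)=\sum_S\pi(S)\prod_{i\in S}x_i$; $r$-homogeneous means the support consists of $r$-sets; strongly log-concave means for every $J\subseteq[n]$, $\nabla^2\log(\partial_J g_\pi)$ is negative semidefinite at the all-ones vector. The support $\mathcal{B}$ is the set of bases of a rank-$r$ matroid $\mathcal{M}=(E,\mathcal{I})$. Weights: $w(J)=(r-|J|)!\sum_{B\in\mathcal{B},B\supseteq J}\pi(B)$ for $J\in\mathcal{I}$, $w(J)=0$ otherwise. Let $\Omega_I=\{v\in E\setminus I: I\cup\{v\}\in\mathcal{I}\}$ with distribution $\pi_{I,1}(v)=w(I\cup\{v\})/w(I)$. The walk $P^{\wedge}_{I,1}$ on $\Omega_I$: $P^{\wedge}_{I,1}(u,u)=\frac12$; $P^{\wedge}_{I,1}(u,v)=\frac{w(I\cup\{u,v\})}{2w(I\cup\{u\})}$ if $u\neq v$ and $I\cup\{u,v\}\in\mathcal{I}$; $0$ otherwise. It is reversible with stationary distribution $\pi_{I,1}$. For reversible $P$ with stationary $\mu$: $\mathcal{E}_P(f,g)=\sum_{x,y}\mu(x)f(x)[I-P](x,y)g(y)$, $\mathrm{Ent}_\mu(f)=\mathbb{E}_\mu(f\log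 f)-\mathbb{E}_\mu f\log\mathbb{E}_\mu f$ ($0\log0=0$), $\rho(P)=\inf\{\mathcal{E}_P(f,\log f)/\mathrm{Ent}_\mu(f): f\ge0,\ \mathrm{Ent}_\mu(f)\ne0\}$. *)

theory Defs
  imports "HOL-Analysis.Analysis"
begin

definition gen_poly :: "'a set \<Rightarrow> ('a set \<Rightarrow> real) \<Rightarrow> ('a \<Rightarrow> real) \<Rightarrow> real" where
  "gen_poly E \<pi> x = (\<Sum>S\<in>Pow E. \<pi> S * (\<Prod>i\<in>S. x i))"

definition partial :: "'a \<Rightarrow> (('a \<Rightarrow> real) \<Rightarrow> real) \<Rightarrow> ('a \<Rightarrow> real) \<Rightarrow> real" where
  "partial i F = (\<lambda>x. deriv (\<lambda>t. F (x(i := t))) (x i))"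

definition partial_set :: "('a::linorder) set \<Rightarrow> (('a \<Rightarrow> real) \<Rightarrow> real) \<Rightarrow> ('a \<Rightarrow> real) \<Rightarrow> real" where
  "partial_set J F = foldr partial (sorted_list_of_set J) F"

definition strongly_log_concave :: "('a::linorder) set \<Rightarrow> ('a set \<Rightarrow> real) \<Rightarrow> bool" where
  "strongly_log_concave E \<pi> \<longleftrightarrow>
     (\<forall>J \<subseteq> E. \<forall>v :: 'a \<Rightarrow> real.
        (\<Sum>i\<in>E. \<Sum>j\<in>E. v i * v j *
            partial i (partial j (\<lambda>x. ln (partial_set J (gen_poly E \<pi>) x))) (\<lambda>_. 1)) \<le> 0)"

definition matroid_bases :: "'a set \<Rightarrow> 'a set set \<Rightarrow> bool" where
  "matroid_bases E \<B> \<longleftrightarrow> finite E \<and> \<B> \<noteq> {} \<and> (\<forall>B\<in>\<B>. B \<subseteq> E) \<and>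
     (\<forall>B1\<in>\<B>. \<forall>B2\<in>\<B>. \<forall>x\<in>B1 - B2. \<exists>y\<in>B2 - B1. insert y (B1 - {x}) \<in> \<B>)"

definition support :: "('a set \<Rightarrow> real) \<Rightarrow> 'a set set" where
  "support \<pi> = {S. \<pi> S \<noteq> 0}"

definition indep :: "('a set \<Rightarrow> real) \<Rightarrow> 'a set set" where
  "indep \<pi> = {I. \<exists>B\<in>support \<pi>. I \<subseteq> B}"

definition wt :: "('a set \<Rightarrow> real) \<Rightarrow> nat \<Rightarrow> 'a set \<Rightarrow> real" where
  "wt \<pi> r J = (if J \<in> indep \<pi>
      then fact (r - card J) * (\<Sum>B\<in>{B\<in>support \<pi>. J \<subseteq> B}. \<pi> B) else 0)"

definition Omega :: "'a set \<Rightarrow> ('a set \<Rightarrow> real) \<Rightarrow> 'a set \<Rightarrow> 'a set" where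
  "Omega E \<pi> I = {v \<in> E - I. insert v I \<in> indep \<pi>}"

definition pi_link :: "('a set \<Rightarrow> real) \<Rightarrow> nat \<Rightarrow> 'a set \<Rightarrow> 'a \<Rightarrow> real" where
  "pi_link \<pi> r I v = wt \<pi> r (insert v I) / wt \<pi> r I"

definition P_down_up :: "('a set \<Rightarrow> real) \<Rightarrow> nat \<Rightarrow> 'a set \<Rightarrow> 'a \<Rightarrow> 'a \<Rightarrow> real" where
  "P_down_up \<pi> r I u v =
     (if u = v then 1/2
      else if insert u (insert v I) \<in> indep \<pi>
        then wt \<pi> r (insert u (insert v I)) / (2 * wt \<pi> r (insert u I))
      else 0)"

definition dirichlet :: "'s set \<Rightarrow> ('s \<Rightarrow> real) \<Rightarrow> ('s \<Rightarrow> 's \<Rightarrow> real)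
    \<Rightarrow> ('s \<Rightarrow> real) \<Rightarrow> ('s \<Rightarrow> real) \<Rightarrow> real" where
  "dirichlet \<Omega> \<mu> P f g =
     (\<Sum>x\<in>\<Omega>. \<Sum>y\<in>\<Omega>. \<mu> x * f x * ((if x = y then 1 else 0) - P x y) * g y)"

definition expect :: "'s set \<Rightarrow> ('s \<Rightarrow> real) \<Rightarrow> ('s \<Rightarrow> real) \<Rightarrow> real" where
  "expect \<Omega> \<mu> f = (\<Sum>x\<in>\<Omega>. \<mu> x * f x)"

text \<open>Note ln 0 = 0 in Isabelle, so 0 * ln 0 = 0 as required.\<close>
definition ent :: "'s set \<Rightarrow> ('s \<Rightarrow> real) \<Rightarrow> ('s \<Rightarrow> real) \<Rightarrow> real" where
  "ent \<Omega> \<mu> f = expect \<Omega> \<mu> (\<lambda>x. f x * ln (f x))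
                 - expect \<Omega> \<mu> f * ln (expect \<Omega> \<mu> f)"

text \<open>The infimum ranges over positive f: for f with
  zeros, E(f, log f) is +infinity in the extended-real reading whenever a zero is adjacent
  to a positive value, so such f do not affect the infimum.\<close>
definition mlsi_const :: "'s set \<Rightarrow> ('s \<Rightarrow> real) \<Rightarrow> ('s \<Rightarrow> 's \<Rightarrow> real) \<Rightarrow> real" where
  "mlsi_const \<Omega> \<mu> P = Inf {dirichlet \<Omega> \<mu> P f (\<lambda>x. ln (f x)) / ent \<Omega> \<mu> f | f.
       (\<forall>x\<in>\<Omega>. f x > 0) \<and> ent \<Omega> \<mu> f \<noteq> 0}"

end

theory Submission
  imports Defs
begin


lemma ln_strict: fixes x :: real assumes "0 < x" "x \<noteq> 1" shows "ln x < x - 1"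
proof -
  have s: "sqrt x > 0" "sqrt x \<noteq> 1" using assms by auto
  have "ln x = 2 * ln (sqrt x)" using assms by (simp add: ln_sqrt)
  also have "\<dots> \<le> 2 * (sqrt x - 1)" using ln_le_minus_one[OF s(1)] by simp
  also have "\<dots> < x - 1"
  proof -
    have "(sqrt x - 1)^2 > 0" using s by simp
    then show ?thesis using assms by (simp add: power2_eq_square algebra_simps)
  qed
  finally show ?thesis .
qed

lemma ent_nonneg:
  assumes fin: "finite \<Omega>" and mu: "\<forall>x\<in>\<Omega>. \<mu> x \<ge> 0" and s1: "(\<Sum>x\<in>\<Omega>. \<mu> x) = 1"
    and fp: "\<forall>x\<in>\<Omega>. f x > 0"
  shows "ent \<Omega> \<mu> f \<ge> 0"
proof -
  define m where "m = expect \<Omega> \<mu> f"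
  have mpos: "m > 0"
  proof -
    obtain u where "u \<in> \<Omega>" "\<mu> u > 0" using s1 mu
      by (metis less_eq_real_def sum.neutral zero_neq_one)
    then have "\<mu> u * f u > 0" using fp by simp
    moreover have "\<mu> u * f u \<le> m" unfolding m_def expect_def
      using \<open>u\<in>\<Omega>\<close> fin mu fp by (intro member_le_sum) auto
    ultimately show ?thesis by simp
  qed
  have "ent \<Omega> \<mu> f = (\<Sum>x\<in>\<Omega>. \<mu> x * f x * ln (f x / m))"
  proof -
    have "(\<Sum>x\<in>\<Omega>. \<mu> x * f x * ln (f x / m)) = (\<Sum>x\<in>\<Omega>. \<mu> x * (f x * ln (f x)) - (\<mu> x * f x) * ln m)"
      using fp mpos by (intro sum.cong) (auto simp: ln_div algebra_simps)
    also have "\<dots> = expect \<Omega> \<mu> (\<lambda>x. f x * ln (f x)) - m * ln m"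
      unfolding m_def expect_def by (simp add: sum_subtractf sum_distrib_right)
    finally show ?thesis unfolding ent_def m_def by simp
  qed
  also have "\<dots> \<ge> (\<Sum>x\<in>\<Omega>. \<mu> x * f x - \<mu> x * m)"
  proof (intro sum_mono)
    fix x assume x: "x \<in> \<Omega>"
    have "ln (m / f x) \<le> m / f x - 1" using ln_le_minus_one[of "m / f x"] fp x mpos by simp
    moreover have "f x > 0" using fp x by simp
    ultimately have "ln (f x / m) \<ge> 1 - m / f x" using mpos by (simp add: ln_div)
    then have "\<mu> x * f x * ln (f x / m) \<ge> \<mu> x * f x * (1 - m / f x)"
      using mu fp x by (intro mult_left_mono) auto
    moreover have "\<mu> x * f x * (1 - m / f x) = \<mu> x * f x - \<mu> x * m"
      using \<open>f x > 0\<close> by (simp add: field_simps)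
    ultimately show "\<mu> x * f x - \<mu> x * m \<le> \<mu> x * f x * ln (f x / m)" by simp
  qed
  also have "(\<Sum>x\<in>\<Omega>. \<mu> x * f x - \<mu> x * m) = 0"
    using s1 unfolding m_def expect_def by (simp add: sum_subtractf sum_distrib_right[symmetric])
  finally show ?thesis by simp
qed

lemma ent_pos:
  assumes fin: "finite \<Omega>" and mu: "\<forall>x\<in>\<Omega>. \<mu> x \<ge> 0" and s1: "(\<Sum>x\<in>\<Omega>. \<mu> x) = 1"
    and fp: "\<forall>x\<in>\<Omega>. f x > 0" and u: "u \<in> \<Omega>" "\<mu> u > 0" "f u \<noteq> expect \<Omega> \<mu> f"
  shows "ent \<Omega> \<mu> f > 0"
proof -
  define m where "m = expect \<Omega> \<mu> f"
  have mpos: "m > 0"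
  proof -
    have "\<mu> u * f u > 0" using fp u by simp
    moreover have "\<mu> u * f u \<le> m" unfolding m_def expect_def
      using u fin mu fp by (intro member_le_sum) auto
    ultimately show ?thesis by simp
  qed
  have "ent \<Omega> \<mu> f = (\<Sum>x\<in>\<Omega>. \<mu> x * f x * ln (f x / m))"
  proof -
    have "(\<Sum>x\<in>\<Omega>. \<mu> x * f x * ln (f x / m)) = (\<Sum>x\<in>\<Omega>. \<mu> x * (f x * ln (f x)) - (\<mu> x * f x) * ln m)"
      using fp mpos by (intro sum.cong) (auto simp: ln_div algebra_simps)
    also have "\<dots> = expect \<Omega> \<mu> (\<lambda>x. f x * ln (f x)) - m * ln m"
      unfolding m_def expect_def by (simp add: sum_subtractf sum_distrib_right)
    finally show ?thesis unfolding ent_def m_def by simp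
  qed
  also have "\<dots> > (\<Sum>x\<in>\<Omega>. \<mu> x * f x - \<mu> x * m)"
  proof (rule sum_strict_mono_ex1[OF fin])
    have gen: "\<mu> x * f x - \<mu> x * m \<le> \<mu> x * f x * ln (f x / m)" if x: "x \<in> \<Omega>" for x
    proof -
      have "ln (m / f x) \<le> m / f x - 1" using ln_le_minus_one[of "m / f x"] fp x mpos by simp
      moreover have "f x > 0" using fp x by simp
      ultimately have "ln (f x / m) \<ge> 1 - m / f x" using mpos by (simp add: ln_div)
      then have "\<mu> x * f x * ln (f x / m) \<ge> \<mu> x * f x * (1 - m / f x)"
        using mu fp x by (intro mult_left_mono) auto
      moreover have "\<mu> x * f x * (1 - m / f x) = \<mu> x * f x - \<mu> x * m"
        using \<open>f x > 0\<close> by (simp add: field_simps)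
      ultimately show ?thesis by simp
    qed
    then show "\<forall>x\<in>\<Omega>. \<mu> x * f x - \<mu> x * m \<le> \<mu> x * f x * ln (f x / m)" by blast
    have fu: "f u > 0" using fp u by simp
    have ne: "m / f u \<noteq> 1" using u fu unfolding m_def by auto
    have "ln (m / f u) < m / f u - 1" using ln_strict[of "m / f u"] fu mpos ne by simp
    then have "ln (f u / m) > 1 - m / f u" using mpos fu by (simp add: ln_div)
    then have "\<mu> u * f u * ln (f u / m) > \<mu> u * f u * (1 - m / f u)"
      using u fu by (intro mult_strict_left_mono) auto
    moreover have "\<mu> u * f u * (1 - m / f u) = \<mu> u * f u - \<mu> u * m"
      using fu by (simp add: field_simps)
    ultimately show "\<exists>x\<in>\<Omega>. \<mu> x * f x - \<mu> x * m < \<mu> x * f x * ln (f x / m)" using u by auto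
  qed
  also have "(\<Sum>x\<in>\<Omega>. \<mu> x * f x - \<mu> x * m) = 0"
    using s1 unfolding m_def expect_def by (simp add: sum_subtractf sum_distrib_right[symmetric])
  finally show ?thesis by simp
qed

lemma dirichlet_bound:
  fixes \<mu> :: "'s \<Rightarrow> real" and M :: "'s \<Rightarrow> 's \<Rightarrow> real"
  assumes fin: "finite \<Omega>" and mu: "\<forall>x\<in>\<Omega>. \<mu> x > 0" and s1: "(\<Sum>x\<in>\<Omega>. \<mu> x) = 1"
    and Msym: "\<forall>x\<in>\<Omega>. \<forall>y\<in>\<Omega>. M x y = M y x"
    and Mnn: "\<forall>x\<in>\<Omega>. \<forall>y\<in>\<Omega>. M x y \<ge> 0"
    and Mdiag: "\<forall>x\<in>\<Omega>. M x x = 0"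
    and Mrow: "\<forall>x\<in>\<Omega>. (\<Sum>y\<in>\<Omega>. M x y) = \<mu> x"
    and quad: "\<And>h. (\<Sum>x\<in>\<Omega>. \<Sum>y\<in>\<Omega>. h x * h y * M x y) \<le> c * (\<Sum>x\<in>\<Omega>. \<mu> x * h x)^2"
    and P: "\<forall>x\<in>\<Omega>. \<forall>y\<in>\<Omega>. P x y = (if x = y then 1/2 else M x y / (2 * \<mu> x))"
    and fp: "\<forall>x\<in>\<Omega>. f x > 0"
  shows "dirichlet \<Omega> \<mu> P f (\<lambda>x. ln (f x)) \<ge> ent \<Omega> \<mu> f / 2"
proof -
  define m where "m = (\<Sum>x\<in>\<Omega>. \<mu> x * f x)"
  have mpos: "m > 0"
  proof -
    obtain u where "u \<in> \<Omega>" using s1 by fastforce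
    then have "\<mu> u * f u > 0" using fp mu by simp
    moreover have "\<mu> u * f u \<le> m" unfolding m_def
      using \<open>u\<in>\<Omega>\<close> fin mu fp by (intro member_le_sum) (auto intro: less_imp_le)
    ultimately show ?thesis by simp
  qed
  have Mcol: "\<forall>y\<in>\<Omega>. (\<Sum>x\<in>\<Omega>. M x y) = \<mu> y"
    using Mrow Msym by (metis (no_types, lifting) sum.cong)
  define s where "s = (\<Sum>x\<in>\<Omega>. \<Sum>y\<in>\<Omega>. M x y * f x * f y)"
  have A1: "(\<Sum>x\<in>\<Omega>. \<Sum>y\<in>\<Omega>. M x y * f x) = m"
    unfolding m_def using Mrow by (simp add: sum_distrib_right[symmetric])
  have A2: "(\<Sum>x\<in>\<Omega>. \<Sum>y\<in>\<Omega>. M x y * f y) = m"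
  proof -
    have "(\<Sum>x\<in>\<Omega>. \<Sum>y\<in>\<Omega>. M x y * f y) = (\<Sum>y\<in>\<Omega>. \<Sum>x\<in>\<Omega>. M x y * f y)"
      by (rule sum.swap)
    also have "\<dots> = m" unfolding m_def using Mcol by (simp add: sum_distrib_right[symmetric])
    finally show ?thesis .
  qed
  have A3: "(\<Sum>x\<in>\<Omega>. \<Sum>y\<in>\<Omega>. M x y) = 1" using Mrow s1 by simp
  have sle: "s \<le> m^2"
  proof -
    define h where "h x = f x - m" for x
    have "(\<Sum>x\<in>\<Omega>. \<mu> x * h x) = 0"
      unfolding h_def m_def using s1 by (simp add: algebra_simps sum_subtractf sum_distrib_right[symmetric])
    with quad[of h] have q: "(\<Sum>x\<in>\<Omega>. \<Sum>y\<in>\<Omega>. h x * h y * M x y) \<le> 0" by simp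
    have "(\<Sum>x\<in>\<Omega>. \<Sum>y\<in>\<Omega>. h x * h y * M x y)
      = (\<Sum>x\<in>\<Omega>. \<Sum>y\<in>\<Omega>. M x y * f x * f y - m * (M x y * f x) - m * (M x y * f y) + m^2 * M x y)"
      unfolding h_def by (intro sum.cong refl) (simp add: algebra_simps power2_eq_square)
    also have "\<dots> = s - m * m - m * m + m^2 * 1"
      unfolding s_def using A1 A2 A3
      by (simp add: sum_subtractf sum.distrib sum_distrib_left[symmetric])
    finally show ?thesis using q by (simp add: power2_eq_square)
  qed
  have key: "(\<Sum>x\<in>\<Omega>. \<Sum>y\<in>\<Omega>. M x y * f x * ln (f y)) \<le> m * ln m"
  proof -
    have "(\<Sum>x\<in>\<Omega>. \<Sum>y\<in>\<Omega>. M x y * f x * ln (f y))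
       \<le> (\<Sum>x\<in>\<Omega>. \<Sum>y\<in>\<Omega>. M x y * f x * (ln m + f y / m - 1))"
    proof (intro sum_mono)
      fix x y assume x: "x \<in> \<Omega>" and y: "y \<in> \<Omega>"
      have "ln (f y / m) \<le> f y / m - 1" using ln_le_minus_one[of "f y / m"] fp y mpos by simp
      moreover have "f y > 0" using fp y by simp
      ultimately have "ln (f y) \<le> ln m + f y / m - 1" using mpos by (simp add: ln_div)
      moreover have "M x y * f x \<ge> 0" using Mnn fp x y by (simp add: less_imp_le)
      ultimately show "M x y * f x * ln (f y) \<le> M x y * f x * (ln m + f y / m - 1)"
        by (intro mult_left_mono) auto
    qed
    also have "\<dots> = (\<Sum>x\<in>\<Omega>. \<Sum>y\<in>\<Omega>. (ln m - 1) * (M x y * f x) + (M x y * f x * f y) / m)"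
      by (intro sum.cong refl) (simp add: algebra_simps diff_divide_distrib add_divide_distrib)
    also have "\<dots> = (ln m - 1) * m + s / m"
      unfolding s_def using A1
      by (simp add: sum.distrib sum_distrib_left[symmetric] sum_divide_distrib[symmetric])
    also have "\<dots> \<le> (ln m - 1) * m + m"
      using sle mpos by (simp add: divide_le_eq power2_eq_square)
    finally show ?thesis by (simp add: algebra_simps)
  qed
  have D: "dirichlet \<Omega> \<mu> P f (\<lambda>x. ln (f x)) =
     ((\<Sum>x\<in>\<Omega>. \<mu> x * (f x * ln (f x))) - (\<Sum>x\<in>\<Omega>. \<Sum>y\<in>\<Omega>. M x y * f x * ln (f y))) / 2"
  proof -
    have "dirichlet \<Omega> \<mu> P f (\<lambda>x. ln (f x)) =
       (\<Sum>x\<in>\<Omega>. \<Sum>y\<in>\<Omega>. ((if x = y then \<mu> x * (f x * ln (f x)) else 0) - M x y * f x * ln (f y)) / 2)"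
      unfolding dirichlet_def
    proof (intro sum.cong refl)
      fix x y assume x: "x \<in> \<Omega>" and y: "y \<in> \<Omega>"
      show "\<mu> x * f x * ((if x = y then 1 else 0) - P x y) * ln (f y) =
         ((if x = y then \<mu> x * (f x * ln (f x)) else 0) - M x y * f x * ln (f y)) / 2"
        using P x y Mdiag mu by (auto simp: field_simps)
    qed
    also have "\<dots> = ((\<Sum>x\<in>\<Omega>. \<mu> x * (f x * ln (f x))) - (\<Sum>x\<in>\<Omega>. \<Sum>y\<in>\<Omega>. M x y * f x * ln (f y))) / 2"
      using fin by (simp add: sum_divide_distrib[symmetric] sum_subtractf sum.delta)
    finally show ?thesis .
  qed
  show ?thesis unfolding D ent_def expect_def using key m_def by simp
qed



definition dc :: "'a \<Rightarrow> 'a set \<Rightarrow> ('a set \<Rightarrow> real) \<Rightarrow> 'a set \<Rightarrow> real" where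
  "dc i A c T = (if i \<in> A then c (insert i T) else 0)"

lemma gen_poly_cong:
  assumes "\<And>S. S \<subseteq> A \<Longrightarrow> c1 S = c2 S"
  shows "gen_poly A c1 = gen_poly A c2"
  unfolding gen_poly_def using assms by (intro ext sum.cong) auto

lemma gen_poly_indep:
  assumes "i \<notin> A"
  shows "gen_poly A c (x(i:=t)) = gen_poly A c x"
  unfolding gen_poly_def
proof (intro sum.cong refl)
  fix S assume "S \<in> Pow A"
  then have "i \<notin> S" using assms by auto
  then show "c S * (\<Prod>j\<in>S. (x(i := t)) j) = c S * (\<Prod>j\<in>S. x j)"
    by (metis (no_types, lifting) fun_upd_other prod.cong)
qed

lemma gen_poly_affine:
  assumes fin: "finite A"
  shows "gen_poly A c (x(i:=t)) = gen_poly A c (x(i:=0)) + t * gen_poly (A - {i}) (dc i A c) x"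
proof (cases "i \<in> A")
  case False
  then show ?thesis using gen_poly_indep[OF False]
    by (simp add: dc_def gen_poly_def)
next
  case True
  define A' where "A' = A - {i}"
  have A: "A = insert i A'" and iA': "i \<notin> A'" and finA': "finite A'"
    using True fin unfolding A'_def by auto
  have disj: "Pow A' \<inter> insert i ` Pow A' = {}" using iA' by auto
  have inj: "inj_on (insert i) (Pow A')" using iA' unfolding inj_on_def by (metis PowD insert_ident subsetD)
  have gen: "gen_poly A c y = (\<Sum>S\<in>Pow A'. c S * (\<Prod>j\<in>S. y j)) + y i * (\<Sum>T\<in>Pow A'. c (insert i T) * (\<Prod>j\<in>T. y j))"
    for y
  proof -
    have "gen_poly A c y = (\<Sum>S\<in>Pow A'. c S * (\<Prod>j\<in>S. y j)) + (\<Sum>S\<in>insert i ` Pow A'. c S * (\<Prod>j\<in>S. y j))"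
      unfolding gen_poly_def A Pow_insert using finA' disj by (intro sum.union_disjoint) auto
    also have "(\<Sum>S\<in>insert i ` Pow A'. c S * (\<Prod>j\<in>S. y j)) = (\<Sum>T\<in>Pow A'. c (insert i T) * (\<Prod>j\<in>insert i T. y j))"
      using inj by (simp add: sum.reindex)
    also have "\<dots> = (\<Sum>T\<in>Pow A'. y i * (c (insert i T) * (\<Prod>j\<in>T. y j)))"
    proof (intro sum.cong refl)
      fix T assume "T \<in> Pow A'"
      then have "i \<notin> T" "finite T" using iA' finA' by (auto intro: finite_subset)
      then show "c (insert i T) * (\<Prod>j\<in>insert i T. y j) = y i * (c (insert i T) * (\<Prod>j\<in>T. y j))"
        by simp
    qed
    finally show ?thesis by (simp add: sum_distrib_left)
  qed
  have eqS: "(\<Sum>S\<in>Pow A'. c S * (\<Prod>j\<in>S. (x(i:=s)) j)) = (\<Sum>S\<in>Pow A'. c S * (\<Prod>j\<in>S. x j))" for s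
    using gen_poly_indep[OF iA', of c x s] unfolding gen_poly_def .
  have eqT: "(\<Sum>T\<in>Pow A'. c (insert i T) * (\<Prod>j\<in>T. (x(i:=s)) j)) = gen_poly (A - {i}) (dc i A c) x" for s
    using gen_poly_indep[OF iA', of "\<lambda>T. c (insert i T)" x s] True
    unfolding gen_poly_def A'_def dc_def by simp
  have 1: "gen_poly A c (x(i:=t)) = (\<Sum>S\<in>Pow A'. c S * (\<Prod>j\<in>S. x j)) + t * gen_poly (A - {i}) (dc i A c) x"
    using gen[of "x(i:=t)"] eqS[of t] eqT[of t] by simp
  have 2: "gen_poly A c (x(i:=0)) = (\<Sum>S\<in>Pow A'. c S * (\<Prod>j\<in>S. x j))"
    using gen[of "x(i:=0)"] eqS[of 0] by simp
  show ?thesis unfolding 1 2 ..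
qed

lemma partial_gen:
  assumes "finite A"
  shows "partial i (gen_poly A c) = gen_poly (A - {i}) (dc i A c)"
proof (rule ext)
  fix x
  have "((\<lambda>t. gen_poly A c (x(i:=t))) has_field_derivative gen_poly (A - {i}) (dc i A c) x) (at (x i))"
  proof -
    have e: "(\<lambda>t. gen_poly A c (x(i:=t))) = (\<lambda>t. gen_poly A c (x(i:=0)) + t * gen_poly (A - {i}) (dc i A c) x)"
      by (rule ext, rule gen_poly_affine[OF assms])
    show ?thesis unfolding e by (auto intro!: derivative_eq_intros)
  qed
  then show "partial i (gen_poly A c) x = gen_poly (A - {i}) (dc i A c) x"
    unfolding partial_def by (rule DERIV_imp_deriv)
qed

lemma foldr_partial:
  assumes "finite A" "distinct xs" "set xs \<subseteq> A"
  shows "foldr partial xs (gen_poly A c) = gen_poly (A - set xs) (\<lambda>T. c (T \<union> set xs))"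
  using assms(2,3)
proof (induction xs)
  case Nil
  then show ?case by simp
next
  case (Cons a xs)
  have fin: "finite (A - set xs)" using assms(1) by simp
  have aa: "a \<in> A - set xs" using Cons.prems by auto
  have "foldr partial (a # xs) (gen_poly A c) = partial a (gen_poly (A - set xs) (\<lambda>T. c (T \<union> set xs)))"
    using Cons by simp
  also have "\<dots> = gen_poly (A - set xs - {a}) (dc a (A - set xs) (\<lambda>T. c (T \<union> set xs)))"
    by (rule partial_gen[OF fin])
  also have "\<dots> = gen_poly (A - set (a # xs)) (\<lambda>T. c (T \<union> set (a # xs)))"
  proof -
    have "A - set xs - {a} = A - set (a # xs)" by auto
    moreover have "dc a (A - set xs) (\<lambda>T. c (T \<union> set xs)) = (\<lambda>T. c (T \<union> set (a # xs)))"
      using aa unfolding dc_def by (intro ext) simp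
    ultimately show ?thesis by simp
  qed
  finally show ?case .
qed



lemma partial_ln:
  assumes fin: "finite A" and pos: "gen_poly A c x > 0"
  shows "partial j (\<lambda>y. ln (gen_poly A c y)) x = gen_poly (A - {j}) (dc j A c) x / gen_poly A c x"
proof -
  define \<alpha> where "\<alpha> = gen_poly A c (x(j:=0))"
  define \<beta> where "\<beta> = gen_poly (A - {j}) (dc j A c) x"
  have e: "(\<lambda>t. ln (gen_poly A c (x(j:=t)))) = (\<lambda>t. ln (\<alpha> + t * \<beta>))"
    unfolding \<alpha>_def \<beta>_def by (rule ext) (subst gen_poly_affine[OF fin], rule refl)
  have px: "gen_poly A c x = \<alpha> + x j * \<beta>"
    using gen_poly_affine[OF fin, of c x j "x j"] unfolding \<alpha>_def \<beta>_def by simp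
  have "((\<lambda>t. ln (\<alpha> + t * \<beta>)) has_field_derivative \<beta> / (\<alpha> + x j * \<beta>)) (at (x j))"
    using pos px by (auto intro!: derivative_eq_intros simp: field_simps)
  then have "deriv (\<lambda>t. ln (\<alpha> + t * \<beta>)) (x j) = \<beta> / (\<alpha> + x j * \<beta>)" by (rule DERIV_imp_deriv)
  then show ?thesis unfolding partial_def e using px \<beta>_def by simp
qed

lemma hess:
  assumes fin: "finite A" and pos: "gen_poly A c (\<lambda>_. 1) > 0"
  shows "partial i (partial j (\<lambda>y. ln (gen_poly A c y))) (\<lambda>_. 1) =
     (gen_poly (A - {j} - {i}) (dc i (A - {j}) (dc j A c)) (\<lambda>_. 1) * gen_poly A c (\<lambda>_. 1)
      - gen_poly (A - {i}) (dc i A c) (\<lambda>_. 1) * gen_poly (A - {j}) (dc j A c) (\<lambda>_. 1))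
     / (gen_poly A c (\<lambda>_. 1))^2"
proof -
  define one :: "'a \<Rightarrow> real" where "one = (\<lambda>_. 1)"
  define q where "q = gen_poly (A - {j}) (dc j A c)"
  define \<alpha> where "\<alpha> = gen_poly A c (one(i:=0))"
  define \<beta> where "\<beta> = gen_poly (A - {i}) (dc i A c) one"
  define a where "a = q (one(i:=0))"
  define b where "b = gen_poly (A - {j} - {i}) (dc i (A - {j}) (dc j A c)) one"
  have finj: "finite (A - {j})" using fin by simp
  have pt: "gen_poly A c (one(i:=t)) = \<alpha> + t * \<beta>" for t
    unfolding \<alpha>_def \<beta>_def by (rule gen_poly_affine[OF fin])
  have qt: "q (one(i:=t)) = a + t * b" for t
    unfolding a_def b_def q_def by (rule gen_poly_affine[OF finj])
  have o1: "one(i:=1) = one" unfolding one_def by auto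
  have p1: "gen_poly A c one = \<alpha> + \<beta>" using pt[of 1] o1 by simp
  have q1: "q one = a + b" using qt[of 1] o1 by simp
  define U where "U = {t::real. 0 < \<alpha> + t * \<beta>}"
  have openU: "open U" unfolding U_def
    by (intro open_Collect_less continuous_intros)
  have oneU: "1 \<in> U" unfolding U_def using pos p1 one_def by simp
  have eqU: "(a + t * b) / (\<alpha> + t * \<beta>) = partial j (\<lambda>y. ln (gen_poly A c y)) (one(i:=t))" if "t \<in> U" for t
  proof -
    have "gen_poly A c (one(i:=t)) > 0" using that pt unfolding U_def by simp
    then show ?thesis using partial_ln[OF fin] qt pt unfolding q_def by metis
  qed
  have "((\<lambda>t. (a + t * b) / (\<alpha> + t * \<beta>)) has_field_derivative (b * (\<alpha> + \<beta>) - (a + b) * \<beta>) / (\<alpha> + \<beta>)^2) (at 1)"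
    using oneU unfolding U_def
    by (auto intro!: derivative_eq_intros simp: field_simps power2_eq_square)
  then have "((\<lambda>t. partial j (\<lambda>y. ln (gen_poly A c y)) (one(i:=t))) has_field_derivative (b * (\<alpha> + \<beta>) - (a + b) * \<beta>) / (\<alpha> + \<beta>)^2) (at 1)"
    using openU oneU eqU by (rule has_field_derivative_transform_within_open)
  then have "partial i (partial j (\<lambda>y. ln (gen_poly A c y))) one = (b * (\<alpha> + \<beta>) - (a + b) * \<beta>) / (\<alpha> + \<beta>)^2"
    unfolding partial_def[of i] using DERIV_imp_deriv by (simp add: one_def)
  moreover have "(b * (\<alpha> + \<beta>) - (a + b) * \<beta>) / (\<alpha> + \<beta>)^2 = (b * gen_poly A c one - \<beta> * q one) / (gen_poly A c one)^2"
    by (simp add: p1 q1 algebra_simps)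
  ultimately show ?thesis unfolding one_def[symmetric] b_def \<beta>_def q_def by simp
qed



definition SS :: "('a set \<Rightarrow> real) \<Rightarrow> 'a set \<Rightarrow> real" where
  "SS \<pi> J = (\<Sum>B\<in>{B\<in>support \<pi>. J \<subseteq> B}. \<pi> B)"

lemma SS_zero: "J \<notin> indep \<pi> \<Longrightarrow> SS \<pi> J = 0"
proof -
  assume "J \<notin> indep \<pi>"
  then have "{B\<in>support \<pi>. J \<subseteq> B} = {}" unfolding indep_def by auto
  then show ?thesis unfolding SS_def by (metis sum.empty)
qed

lemma SS_nonneg: "\<forall>S. \<pi> S \<ge> 0 \<Longrightarrow> SS \<pi> J \<ge> 0"
  unfolding SS_def by (simp add: sum_nonneg)

lemma SS_pos:
  assumes "finite (support \<pi>)" "\<forall>S. \<pi> S \<ge> 0" "J \<in> indep \<pi>"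
  shows "SS \<pi> J > 0"
proof -
  obtain B where B: "B \<in> support \<pi>" "J \<subseteq> B" using assms(3) unfolding indep_def by blast
  then have "\<pi> B > 0" using assms(2) unfolding support_def by (simp add: order_less_le)
  then show ?thesis unfolding SS_def using assms B
    by (intro sum_pos2[of _ B]) auto
qed

lemma wt_SS: "wt \<pi> r J = fact (r - card J) * SS \<pi> J"
  unfolding wt_def using SS_zero[of J \<pi>] by (auto simp: SS_def)

lemma indep_mono: "J \<in> indep \<pi> \<Longrightarrow> J' \<subseteq> J \<Longrightarrow> J' \<in> indep \<pi>"
  unfolding indep_def by blast

lemma SS_poly:
  assumes fin: "finite E" and out: "\<forall>S. \<not> S \<subseteq> E \<longrightarrow> \<pi> S = 0" and JE: "J \<subseteq> E"
  shows "gen_poly (E - J) (\<lambda>T. \<pi> (T \<union> J)) (\<lambda>_. 1) = SS \<pi> J"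
proof -
  have "gen_poly (E - J) (\<lambda>T. \<pi> (T \<union> J)) (\<lambda>_. 1) = (\<Sum>T\<in>Pow (E - J). \<pi> (T \<union> J))"
    unfolding gen_poly_def by (simp only: prod.neutral_const mult_1_right)
  also have "\<dots> = (\<Sum>B\<in>(\<lambda>T. T \<union> J) ` Pow (E - J). \<pi> B)"
  proof (rule sum.reindex[symmetric, unfolded comp_def])
    show "inj_on (\<lambda>T. T \<union> J) (Pow (E - J))"
    proof (rule inj_onI)
      fix x y assume x: "x \<in> Pow (E - J)" and y: "y \<in> Pow (E - J)" and e: "x \<union> J = y \<union> J"
      have "x = (x \<union> J) - J" using x by auto
      also have "\<dots> = (y \<union> J) - J" by (simp only: e)
      also have "\<dots> = y" using y by auto
      finally show "x = y" .
    qed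
  qed
  also have "(\<lambda>T. T \<union> J) ` Pow (E - J) = {B. J \<subseteq> B \<and> B \<subseteq> E}"
  proof
    show "{B. J \<subseteq> B \<and> B \<subseteq> E} \<subseteq> (\<lambda>T. T \<union> J) ` Pow (E - J)"
    proof
      fix B assume "B \<in> {B. J \<subseteq> B \<and> B \<subseteq> E}"
      then have b1: "B = (B - J) \<union> J" and b2: "B - J \<in> Pow (E - J)" by auto
      show "B \<in> (\<lambda>T. T \<union> J) ` Pow (E - J)"
        by (rule image_eqI[where x="B - J", OF _ b2]) (rule b1)
    qed
  qed (use JE in auto)
  also have "(\<Sum>B\<in>{B. J \<subseteq> B \<and> B \<subseteq> E}. \<pi> B) = SS \<pi> J"
    unfolding SS_def
  proof (rule sum.mono_neutral_right)
    show "finite {B. J \<subseteq> B \<and> B \<subseteq> E}" by (rule finite_subset[of _ "Pow E"]) (use fin in auto)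
    show "{B \<in> support \<pi>. J \<subseteq> B} \<subseteq> {B. J \<subseteq> B \<and> B \<subseteq> E}"
    proof (rule subsetI)
      fix B assume "B \<in> {B \<in> support \<pi>. J \<subseteq> B}"
      then have "\<pi> B \<noteq> 0" "J \<subseteq> B" unfolding support_def by auto
      then show "B \<in> {B. J \<subseteq> B \<and> B \<subseteq> E}" using out by blast
    qed
    show "\<forall>i\<in>{B. J \<subseteq> B \<and> B \<subseteq> E} - {B \<in> support \<pi>. J \<subseteq> B}. \<pi> i = 0"
      unfolding support_def by auto
  qed
  finally show ?thesis .
qed

lemma SS_count:
  assumes fin: "finite E" and out: "\<forall>S. \<not> S \<subseteq> E \<longrightarrow> \<pi> S = 0"
    and card: "\<forall>S\<in>support \<pi>. card S = r" and JE: "J \<subseteq> E"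
  shows "(\<Sum>j\<in>E - J. SS \<pi> (insert j J)) = real (r - card J) * SS \<pi> J"
proof -
  have suppE: "B \<subseteq> E" if "B \<in> support \<pi>" for B
  proof -
    have "\<pi> B \<noteq> 0" using that unfolding support_def by simp
    then show ?thesis using out by blast
  qed
  have finS: "finite (support \<pi>)"
    by (rule finite_subset[of _ "Pow E"]) (use fin suppE in auto)
  have finJ: "finite J" using finite_subset[OF JE fin] .
  have sif: "SS \<pi> K = (\<Sum>B\<in>support \<pi>. if K \<subseteq> B then \<pi> B else 0)" for K
    unfolding SS_def using finS by (simp only: sum.inter_filter)
  have "(\<Sum>j\<in>E - J. SS \<pi> (insert j J)) = (\<Sum>j\<in>E - J. \<Sum>B\<in>support \<pi>. if insert j J \<subseteq> B then \<pi> B else 0)"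
    by (simp only: sif)
  also have "\<dots> = (\<Sum>B\<in>support \<pi>. \<Sum>j\<in>E - J. if insert j J \<subseteq> B then \<pi> B else 0)"
    by (rule sum.swap)
  also have "\<dots> = (\<Sum>B\<in>support \<pi>. if J \<subseteq> B then real (r - card J) * \<pi> B else 0)"
  proof (rule sum.cong[OF refl])
    fix B assume B: "B \<in> support \<pi>"
    show "(\<Sum>j\<in>E - J. if insert j J \<subseteq> B then \<pi> B else 0) = (if J \<subseteq> B then real (r - card J) * \<pi> B else 0)"
    proof (cases "J \<subseteq> B")
      case True
      have "(\<Sum>j\<in>E - J. if insert j J \<subseteq> B then \<pi> B else 0) = (\<Sum>j\<in>E - J. if j \<in> B then \<pi> B else 0)"
        using True by (intro sum.cong refl) simp
      also have "\<dots> = (\<Sum>j\<in>{j\<in>E - J. j \<in> B}. \<pi> B)"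
        using fin by (simp only: sum.inter_filter finite_Diff)
      also have "{j\<in>E - J. j \<in> B} = B - J" using suppE[OF B] by auto
      also have "(\<Sum>j\<in>B - J. \<pi> B) = real (card (B - J)) * \<pi> B" by simp
      also have "card (B - J) = r - card J"
        using card B True finJ by (simp add: card_Diff_subset)
      finally show ?thesis using True by simp
    next
      case False
      then have "(\<Sum>j\<in>E - J. if insert j J \<subseteq> B then \<pi> B else 0) = (\<Sum>j\<in>E - J. 0)"
        by (intro sum.cong refl) simp
      then show ?thesis using False by simp
    qed
  qed
  also have "\<dots> = real (r - card J) * SS \<pi> J"
    unfolding sif sum_distrib_left by (intro sum.cong refl) simp
  finally show ?thesis .
qed

lemma sum2_restrict:
  fixes F :: "'b \<Rightarrow> 'b \<Rightarrow> real"
  assumes "finite E" "\<Omega> \<subseteq> E" "\<And>i j. i \<notin> \<Omega> \<or> j \<notin> \<Omega> \<Longrightarrow> F i j = 0"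
  shows "(\<Sum>i\<in>E. \<Sum>j\<in>E. F i j) = (\<Sum>i\<in>\<Omega>. \<Sum>j\<in>\<Omega>. F i j)"
proof -
  have "(\<Sum>i\<in>E. \<Sum>j\<in>E. F i j) = (\<Sum>i\<in>\<Omega>. \<Sum>j\<in>E. F i j)"
    using assms by (intro sum.mono_neutral_right) auto
  also have "\<dots> = (\<Sum>i\<in>\<Omega>. \<Sum>j\<in>\<Omega>. F i j)"
    using assms by (intro sum.cong refl sum.mono_neutral_right) auto
  finally show ?thesis .
qed



theorem lemma5p1:
  fixes E :: "'a::linorder set" and \<pi> :: "'a set \<Rightarrow> real" and r :: nat and I :: "'a set"
  assumes "finite E"
    and "\<forall>S. \<pi> S \<ge> 0"
    and "\<forall>S. \<not> S \<subseteq> E \<longrightarrow> \<pi> S = 0"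
    and "(\<Sum>S\<in>Pow E. \<pi> S) = 1"
    and "\<forall>S\<in>support \<pi>. card S = r"
    and "strongly_log_concave E \<pi>"
    and "matroid_bases E (support \<pi>)"
    and "I \<in> indep \<pi>"
    and "card I + 2 \<le> r"
  shows "mlsi_const (Omega E \<pi> I) (pi_link \<pi> r I) (P_down_up \<pi> r I) \<ge> 1/2"
proof -
  note fin = assms(1) and nn = assms(2) and out = assms(3) and cardB = assms(5)
    and slc = assms(6) and Iind = assms(8) and kk = assms(9)
  have suppE: "B \<subseteq> E" if "B \<in> support \<pi>" for B
  proof -
    have "\<pi> B \<noteq> 0" using that unfolding support_def by simp
    then show ?thesis using out by blast
  qed
  have finS: "finite (support \<pi>)"
    by (rule finite_subset[of _ "Pow E"]) (use fin suppE in auto)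
  obtain B0 where B0: "B0 \<in> support \<pi>" "I \<subseteq> B0" using Iind unfolding indep_def by blast
  have IE: "I \<subseteq> E" using B0 suppE by blast
  have finI: "finite I" using finite_subset[OF IE fin] .
  define \<Omega> where "\<Omega> = Omega E \<pi> I"
  define \<mu> where "\<mu> = pi_link \<pi> r I"
  define k where "k = r - card I"
  have k2: "k \<ge> 2" using kk unfolding k_def by simp
  define Z where "Z = SS \<pi> I"
  have Zpos: "Z > 0" unfolding Z_def using SS_pos[OF finS nn Iind] .
  define Sx where "Sx x = SS \<pi> (insert x I)" for x
  define Sxy where "Sxy x y = (if x = y then 0 else SS \<pi> (insert x (insert y I)))" for x y
  have Omem: "x \<in> \<Omega> \<longleftrightarrow> x \<in> E \<and> x \<notin> I \<and> insert x I \<in> indep \<pi>" for x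
    unfolding \<Omega>_def Omega_def by auto
  have OE: "\<Omega> \<subseteq> E" using Omem by auto
  have finO: "finite \<Omega>" using finite_subset[OF OE fin] .
  have Sx_pos: "Sx x > 0" if "x \<in> \<Omega>" for x
    unfolding Sx_def using SS_pos[OF finS nn] that Omem by blast
  have Sx_nn: "Sx x \<ge> 0" for x unfolding Sx_def using SS_nonneg[OF nn] .
  have Sxy_nn: "Sxy x y \<ge> 0" for x y unfolding Sxy_def using SS_nonneg[OF nn] by simp
  have Sxy_sym: "Sxy x y = Sxy y x" for x y unfolding Sxy_def by (simp add: insert_commute)
  have fk: "(fact k :: real) = real k * fact (k - 1)" using k2 fact_reduce[of k] by simp
  have fk1: "(fact (k - 1) :: real) = real (k - 1) * fact (k - 2)"
  proof -
    obtain j where kj: "k = j + 2" using k2 by (metis le_add_diff_inverse2)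
    show ?thesis unfolding kj by simp
  qed
  have c1: "r - card (insert x I) = k - 1" if "x \<notin> I" for x
    using that finI unfolding k_def by simp
  have c2: "r - card (insert x (insert y I)) = k - 2" if "x \<notin> I" "y \<notin> I" "x \<noteq> y" for x y
    using that finI unfolding k_def by simp
  have kpos: "real k > 0" "real (k - 1) > 0" using k2 by auto
  have mu_eq: "\<mu> x = Sx x / (real k * Z)" if "x \<in> \<Omega>" for x
  proof -
    have "x \<notin> I" using that Omem by blast
    then have "\<mu> x = fact (k - 1) * Sx x / (fact k * Z)"
      unfolding \<mu>_def pi_link_def wt_SS Sx_def Z_def using c1 k_def by simp
    also have "\<dots> = Sx x / (real k * Z)" unfolding fk using kpos by (simp add: field_simps)
    finally show ?thesis .
  qed
  define M where "M x y = Sxy x y / (real k * real (k - 1) * Z)" for x y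
  have sum_Sx: "(\<Sum>x\<in>\<Omega>. Sx x) = real k * Z"
  proof -
    have "(\<Sum>x\<in>\<Omega>. Sx x) = (\<Sum>x\<in>E - I. SS \<pi> (insert x I))"
      unfolding Sx_def
    proof (rule sum.mono_neutral_left)
      show "finite (E - I)" using fin by simp
      show "\<Omega> \<subseteq> E - I" using Omem by blast
      show "\<forall>i\<in>E - I - \<Omega>. SS \<pi> (insert i I) = 0"
        using Omem SS_zero by blast
    qed
    also have "\<dots> = real k * Z" unfolding k_def Z_def by (rule SS_count[OF fin out cardB IE])
    finally show ?thesis .
  qed
  have row_Sxy: "(\<Sum>y\<in>\<Omega>. Sxy x y) = real (k - 1) * Sx x" if x: "x \<in> \<Omega>" for x
  proof -
    have xI: "x \<notin> I" "x \<in> E" using x Omem by auto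
    define G where "G y = (if y \<in> E - insert x I then SS \<pi> (insert y (insert x I)) else 0)" for y
    have "(\<Sum>y\<in>\<Omega>. Sxy x y) = (\<Sum>y\<in>E. G y)"
    proof (rule sum.mono_neutral_cong_left[OF fin OE])
      show "\<forall>i\<in>E - \<Omega>. G i = 0"
      proof
        fix y assume y: "y \<in> E - \<Omega>"
        show "G y = 0"
        proof (cases "y \<in> E - insert x I")
          case True
          then have "insert y I \<notin> indep \<pi>" using y Omem by auto
          then have "insert y (insert x I) \<notin> indep \<pi>" using indep_mono by blast
          then show ?thesis unfolding G_def using SS_zero[of "insert y (insert x I)" \<pi>] by simp
        next
          case False
          then show ?thesis unfolding G_def by auto
        qed
      qed
      show "Sxy x y = G y" if "y \<in> \<Omega>" for y
        using that Omem unfolding Sxy_def G_def by (auto simp: insert_commute)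
    qed
    also have "(\<Sum>y\<in>E. G y) = (\<Sum>y\<in>E - insert x I. SS \<pi> (insert y (insert x I)))"
      unfolding G_def using fin by (intro sum.mono_neutral_cong_right) auto
    also have "\<dots> = real (r - card (insert x I)) * SS \<pi> (insert x I)"
      using xI IE by (intro SS_count[OF fin out cardB]) auto
    also have "\<dots> = real (k - 1) * Sx x" using c1[OF xI(1)] unfolding Sx_def by simp
    finally show ?thesis .
  qed
  have s1: "(\<Sum>x\<in>\<Omega>. \<mu> x) = 1"
  proof -
    have "(\<Sum>x\<in>\<Omega>. \<mu> x) = (\<Sum>x\<in>\<Omega>. Sx x) / (real k * Z)"
      using mu_eq by (simp add: sum_divide_distrib)
    then show ?thesis using sum_Sx kpos Zpos by simp
  qed
  have Mrow: "\<forall>x\<in>\<Omega>. (\<Sum>y\<in>\<Omega>. M x y) = \<mu> x"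
  proof
    fix x assume x: "x \<in> \<Omega>"
    have "(\<Sum>y\<in>\<Omega>. M x y) = (\<Sum>y\<in>\<Omega>. Sxy x y) / (real k * real (k - 1) * Z)"
      unfolding M_def by (simp add: sum_divide_distrib)
    also have "\<dots> = Sx x / (real k * Z)" unfolding row_Sxy[OF x] using kpos Zpos by (simp add: field_simps)
    finally show "(\<Sum>y\<in>\<Omega>. M x y) = \<mu> x" using mu_eq[OF x] by simp
  qed
  have Pform: "\<forall>x\<in>\<Omega>. \<forall>y\<in>\<Omega>. P_down_up \<pi> r I x y = (if x = y then 1/2 else M x y / (2 * \<mu> x))"
  proof (intro ballI)
    fix x y assume x: "x \<in> \<Omega>" and y: "y \<in> \<Omega>"
    show "P_down_up \<pi> r I x y = (if x = y then 1/2 else M x y / (2 * \<mu> x))"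
    proof (cases "x = y")
      case True then show ?thesis unfolding P_down_up_def by simp
    next
      case False
      have xI: "x \<notin> I" "y \<notin> I" using x y Omem by auto
      have "P_down_up \<pi> r I x y = wt \<pi> r (insert x (insert y I)) / (2 * wt \<pi> r (insert x I))"
        unfolding P_down_up_def using False by (auto simp: wt_def)
      also have "\<dots> = fact (k - 2) * SS \<pi> (insert x (insert y I)) / (2 * (fact (k - 1) * Sx x))"
        unfolding wt_SS Sx_def using c1[OF xI(1)] c2[OF xI False] by simp
      also have "\<dots> = SS \<pi> (insert x (insert y I)) / (2 * real (k - 1) * Sx x)"
      proof -
        have "(fact (k - 2) :: real) > 0" by simp
        then show ?thesis unfolding fk1 using kpos by (simp add: field_simps del: of_nat_diff)
      qed
      also have "\<dots> = M x y / (2 * \<mu> x)"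
        unfolding M_def mu_eq[OF x] Sxy_def using False kpos Zpos Sx_pos[OF x]
        by (simp add: field_simps)
      finally show ?thesis using False by simp
    qed
  qed
  define A where "A = E - I"
  define c0 where "c0 T = \<pi> (T \<union> I)" for T
  have finA: "finite A" unfolding A_def using fin by simp
  have pp: "partial_set I (gen_poly E \<pi>) = gen_poly A c0"
  proof -
    have "partial_set I (gen_poly E \<pi>) = gen_poly (E - set (sorted_list_of_set I)) (\<lambda>T. \<pi> (T \<union> set (sorted_list_of_set I)))"
      unfolding partial_set_def using finI IE by (intro foldr_partial[OF fin]) auto
    then show ?thesis unfolding A_def c0_def using finI by simp
  qed
  have p1: "gen_poly A c0 (\<lambda>_. 1) = Z"
    unfolding A_def c0_def Z_def by (rule SS_poly[OF fin out IE])
  have d1: "gen_poly (A - {j}) (dc j A c0) (\<lambda>_. 1) = Sx j" if j: "j \<in> \<Omega>" for j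
  proof -
    have jA: "j \<in> A" "insert j I \<subseteq> E" using j Omem IE unfolding A_def by auto
    have "gen_poly (A - {j}) (dc j A c0) = gen_poly (E - insert j I) (\<lambda>T. \<pi> (T \<union> insert j I))"
    proof -
      have "A - {j} = E - insert j I" unfolding A_def by auto
      moreover have "dc j A c0 = (\<lambda>T. \<pi> (T \<union> insert j I))"
        unfolding dc_def c0_def using jA by (intro ext) simp
      ultimately show ?thesis by simp
    qed
    then show ?thesis unfolding Sx_def using SS_poly[OF fin out jA(2)] by simp
  qed
  have d2: "gen_poly (A - {j} - {i}) (dc i (A - {j}) (dc j A c0)) (\<lambda>_. 1) = Sxy i j"
    if i: "i \<in> \<Omega>" and j: "j \<in> \<Omega>" for i j
  proof (cases "i = j")
    case True
    have "dc i (A - {j}) (dc j A c0) = (\<lambda>T. 0)" unfolding dc_def using True by auto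
    then show ?thesis unfolding Sxy_def gen_poly_def using True by simp
  next
    case False
    have ij: "i \<in> A" "j \<in> A" "insert i (insert j I) \<subseteq> E" using i j Omem IE unfolding A_def by auto
    have "gen_poly (A - {j} - {i}) (dc i (A - {j}) (dc j A c0)) =
       gen_poly (E - insert i (insert j I)) (\<lambda>T. \<pi> (T \<union> insert i (insert j I)))"
    proof -
      have "A - {j} - {i} = E - insert i (insert j I)" unfolding A_def by auto
      moreover have "dc i (A - {j}) (dc j A c0) = (\<lambda>T. \<pi> (T \<union> insert i (insert j I)))"
        unfolding dc_def c0_def using ij False by (intro ext) (simp add: insert_commute)
      ultimately show ?thesis by simp
    qed
    then show ?thesis unfolding Sxy_def using SS_poly[OF fin out ij(3)] False by simp
  qed
  have H: "partial i (partial j (\<lambda>x. ln (partial_set I (gen_poly E \<pi>) x))) (\<lambda>_. 1)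
      = (Sxy i j * Z - Sx i * Sx j) / Z^2" if i: "i \<in> \<Omega>" and j: "j \<in> \<Omega>" for i j
    unfolding pp using hess[OF finA, of c0 i j] p1 Zpos d1[OF i] d1[OF j] d2[OF i j] by simp
  have key_slc: "Z * (\<Sum>x\<in>\<Omega>. \<Sum>y\<in>\<Omega>. h x * h y * Sxy x y) \<le> (\<Sum>x\<in>\<Omega>. h x * Sx x)^2" for h
  proof -
    define v where "v x = (if x \<in> \<Omega> then h x else 0)" for x
    have "(\<Sum>i\<in>E. \<Sum>j\<in>E. v i * v j * partial i (partial j (\<lambda>x. ln (partial_set I (gen_poly E \<pi>) x))) (\<lambda>_. 1)) \<le> 0"
      using slc IE unfolding strongly_log_concave_def by blast
    also have "(\<Sum>i\<in>E. \<Sum>j\<in>E. v i * v j * partial i (partial j (\<lambda>x. ln (partial_set I (gen_poly E \<pi>) x))) (\<lambda>_. 1))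
       = (\<Sum>i\<in>\<Omega>. \<Sum>j\<in>\<Omega>. v i * v j * partial i (partial j (\<lambda>x. ln (partial_set I (gen_poly E \<pi>) x))) (\<lambda>_. 1))"
      by (rule sum2_restrict[OF fin OE]) (auto simp: v_def)
    also have "\<dots> = (\<Sum>i\<in>\<Omega>. \<Sum>j\<in>\<Omega>. h i * h j * ((Sxy i j * Z - Sx i * Sx j) / Z^2))"
      by (intro sum.cong refl) (simp add: v_def H)
    also have "\<dots> = (Z * (\<Sum>x\<in>\<Omega>. \<Sum>y\<in>\<Omega>. h x * h y * Sxy x y) - (\<Sum>x\<in>\<Omega>. \<Sum>y\<in>\<Omega>. (h x * Sx x) * (h y * Sx y))) / Z^2"
      by (simp add: sum_divide_distrib[symmetric] sum_subtractf sum_distrib_left algebra_simps diff_divide_distrib)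
    also have "(\<Sum>x\<in>\<Omega>. \<Sum>y\<in>\<Omega>. (h x * Sx x) * (h y * Sx y)) = (\<Sum>x\<in>\<Omega>. h x * Sx x)^2"
      by (simp add: power2_eq_square sum_product)
    finally show ?thesis using Zpos by (simp add: divide_le_0_iff)
  qed
  have quad: "(\<Sum>x\<in>\<Omega>. \<Sum>y\<in>\<Omega>. h x * h y * M x y) \<le> (real k / real (k - 1)) * (\<Sum>x\<in>\<Omega>. \<mu> x * h x)^2" for h
  proof -
    define Q where "Q = (\<Sum>x\<in>\<Omega>. \<Sum>y\<in>\<Omega>. h x * h y * Sxy x y)"
    define L where "L = (\<Sum>x\<in>\<Omega>. h x * Sx x)"
    have e1: "(\<Sum>x\<in>\<Omega>. \<Sum>y\<in>\<Omega>. h x * h y * M x y) = Q / (real k * real (k - 1) * Z)"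
      unfolding Q_def M_def by (simp add: sum_divide_distrib)
    have e2: "(\<Sum>x\<in>\<Omega>. \<mu> x * h x) = L / (real k * Z)"
      unfolding L_def using mu_eq by (simp add: sum_divide_distrib algebra_simps)
    have "Z * Q \<le> L^2" unfolding Q_def L_def by (rule key_slc)
    then have "(Z * Q) / (real k * real (k - 1) * Z^2) \<le> L^2 / (real k * real (k - 1) * Z^2)"
      using kpos Zpos by (intro divide_right_mono) auto
    moreover have "(Z * Q) / (real k * real (k - 1) * Z^2) = Q / (real k * real (k - 1) * Z)"
      using Zpos by (simp add: power2_eq_square)
    ultimately have "Q / (real k * real (k - 1) * Z) \<le> L^2 / (real k * real (k - 1) * Z^2)" by simp
    also have "\<dots> = (real k / real (k - 1)) * (L / (real k * Z))^2"
      using kpos Zpos by (simp add: field_simps power2_eq_square)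
    finally show ?thesis unfolding e1 e2 .
  qed
  have mupos: "\<forall>x\<in>\<Omega>. \<mu> x > 0" using mu_eq Sx_pos kpos Zpos by simp
  have bound: "dirichlet \<Omega> \<mu> (P_down_up \<pi> r I) f (\<lambda>x. ln (f x)) \<ge> ent \<Omega> \<mu> f / 2"
    if fp: "\<forall>x\<in>\<Omega>. f x > 0" for f
  proof (rule dirichlet_bound[OF finO mupos s1 _ _ _ Mrow quad Pform fp])
    show "\<forall>x\<in>\<Omega>. \<forall>y\<in>\<Omega>. M x y = M y x" unfolding M_def using Sxy_sym by simp
    show "\<forall>x\<in>\<Omega>. \<forall>y\<in>\<Omega>. M x y \<ge> 0" unfolding M_def using Sxy_nn kpos Zpos by simp
    show "\<forall>x\<in>\<Omega>. M x x = 0" unfolding M_def Sxy_def by simp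
  qed
  obtain u u' where u: "u \<in> \<Omega>" "u' \<in> \<Omega>" "u \<noteq> u'"
  proof -
    have "card (B0 - I) = r - card I" using cardB B0 finI by (simp add: card_Diff_subset)
    then have cB: "card (B0 - I) \<ge> 2" using kk by simp
    have "B0 - I \<noteq> {}" using cB by (intro notI) simp
    then obtain u where u: "u \<in> B0 - I" by blast
    have "card (B0 - I - {u}) \<ge> 1" using cB u by (simp add: card_Diff_singleton_if)
    then have "B0 - I - {u} \<noteq> {}" by (intro notI) simp
    then obtain u' where u': "u' \<in> B0 - I - {u}" by blast
    have "u \<in> \<Omega>" "u' \<in> \<Omega>" using u u' B0 suppE unfolding Omem indep_def by blast+
    then show ?thesis using that u' by blast
  qed
  have mu_lt: "\<mu> u < 1"
  proof -
    have "\<mu> u + \<mu> u' \<le> (\<Sum>x\<in>\<Omega>. \<mu> x)"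
    proof -
      have "(\<Sum>x\<in>{u, u'}. \<mu> x) \<le> (\<Sum>x\<in>\<Omega>. \<mu> x)"
        using u finO mupos by (intro sum_mono2) (auto intro: less_imp_le)
      then show ?thesis using u by simp
    qed
    then show ?thesis using s1 mupos u by fastforce
  qed
  define f0 where "f0 x = (if x = u then 2 else 1::real)" for x
  have f0p: "\<forall>x\<in>\<Omega>. f0 x > 0" unfolding f0_def by simp
  have ex0: "expect \<Omega> \<mu> f0 = 1 + \<mu> u"
  proof -
    have "expect \<Omega> \<mu> f0 = (\<Sum>x\<in>\<Omega>. \<mu> x + (if x = u then \<mu> x else 0))"
      unfolding expect_def f0_def by (intro sum.cong refl) auto
    also have "\<dots> = 1 + \<mu> u" using s1 u finO by (simp add: sum.distrib)
    finally show ?thesis .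
  qed
  have ent0: "ent \<Omega> \<mu> f0 > 0"
  proof -
    have ne: "f0 u \<noteq> expect \<Omega> \<mu> f0" unfolding ex0 using mu_lt by (simp add: f0_def)
    show ?thesis using mupos u ne by (intro ent_pos[OF finO _ s1 f0p, of u]) (auto intro: less_imp_le)
  qed
  define X where "X = {dirichlet \<Omega> \<mu> (P_down_up \<pi> r I) f (\<lambda>x. ln (f x)) / ent \<Omega> \<mu> f | f.
       (\<forall>x\<in>\<Omega>. f x > 0) \<and> ent \<Omega> \<mu> f \<noteq> 0}"
  have Xne: "X \<noteq> {}" unfolding X_def using f0p ent0 by auto
  have Xge: "\<forall>z\<in>X. 1/2 \<le> z"
  proof
    fix z assume "z \<in> X"
    then obtain f where f: "\<forall>x\<in>\<Omega>. f x > 0" "ent \<Omega> \<mu> f \<noteq> 0"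
      and z: "z = dirichlet \<Omega> \<mu> (P_down_up \<pi> r I) f (\<lambda>x. ln (f x)) / ent \<Omega> \<mu> f"
      unfolding X_def by blast
    have "ent \<Omega> \<mu> f \<ge> 0" using ent_nonneg[OF finO _ s1 f(1)] mupos by (auto intro: less_imp_le)
    then have ep: "ent \<Omega> \<mu> f > 0" using f(2) by simp
    show "1/2 \<le> z" unfolding z using bound[OF f(1)] ep by (simp add: le_divide_eq)
  qed
  have "1/2 \<le> Inf X" using Xne Xge by (intro cInf_greatest) auto
  then show ?thesis unfolding mlsi_const_def X_def \<Omega>_def \<mu>_def .
qed


end
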